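(* Let $M=\begin{bmatrix} e & f\\ g & h\end{bmatrix}\in SL_2(\mathbb C)$, let $\mu=\operatorname{tr}M$ with $\mu^2\neq 4$, let $n\ge1$ be an integer, and put $X=S_{n-1}^2(\mu)$ and $Y=S_{n-1}(\mu)S_{n-2}(\mu)$. Then $$\sum_{i=0}^{n-1}(\mathrm{Ad}_M)^i=\frac{1}{\mu^2-4}\begin{bmatrix} C_{11}&C_{12}&C_{13}\\ C_{21}&C_{22}&C_{23}\\ C_{31}&C_{32}&C_{33}\end{bmatrix},$$ where $C_{11}=2nfg+h^2(2X-\mu Y)-2h(\mu X-2Y)+(\mu^2-2)X-\mu Y$, $C_{12}=2f\big(n(e-h)+h(2X-\mu Y)-\mu X+2Y\big)$, $C_{13}=f^2(2n-2X+\mu Y)$, $C_{21}=-g\big(n(h-e)-h(2X-\mu Y)+\mu X-2Y\big)$, $C_{22}=n(e-h)^2+2fg(2X-\mu Y)$, $C_{23}=f\big(n(e-h)+h(2X-\mu Y)-\mu X+(\mu^2-2)Y\big)$, $C_{31}=g^2(2n-2X+\mu Y)$, $C_{32}=-2g\big(n(h-e)-h(2X-\mu Y)+\mu X-(\mu^2-2)Y\big)$, $C_{33}=2nfg+h^2(2X-\mu Y)-2h\big(\mu X-(\mu^2-2)Y\big)+(\mu^2-2)X-(\mu^3-3\mu)Y$.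
   Context: $S_k(v)$ are the Chebyshev polynomials of the second kind: $S_0(v)=1$, $S_1(v)=v$, $S_k(v)=vS_{k-1}(v)-S_{k-2}(v)$ for all integers $k$ (so $S_{-1}=0$). For $P\in SL_2(\mathbb C)$, $\mathrm{Ad}_P$ is the linear map $g\mapsto PgP^{-1}$ on $sl_2(\mathbb C)$, written as a $3\times3$ matrix with respect to the ordered basis $E=\begin{bmatrix}0&1\\0&0\end{bmatrix}$, $H=\begin{bmatrix}1&0\\0&-1\end{bmatrix}$, $F=\begin{bmatrix}0&0\\1&0\end{bmatrix}$, the $j$-th column being the coordinates of the image of the $j$-th basis vector. *)

theory Defs
  imports "HOL-Analysis.Analysis"
begin

fun chebS_nat :: "nat \<Rightarrow> complex \<Rightarrow> complex" where
  "chebS_nat 0 v = 1"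
| "chebS_nat (Suc 0) v = v"
| "chebS_nat (Suc (Suc k)) v = v * chebS_nat (Suc k) v - chebS_nat k v"

text \<open>Extension to all integers by the same recurrence: S_(-1) = 0, S_(-k) = - S_(k-2).\<close>
definition chebS :: "int \<Rightarrow> complex \<Rightarrow> complex" where
  "chebS k v = (if k \<ge> 0 then chebS_nat (nat k) v
                else if k = -1 then 0 else - chebS_nat (nat (- k - 2)) v)"

definition SL2 :: "(complex^2^2) set" where
  "SL2 = {P. det P = 1}"

definition mat2 :: "complex \<Rightarrow> complex \<Rightarrow> complex \<Rightarrow> complex \<Rightarrow> complex^2^2" where
  "mat2 a b c d = vector [vector [a, b], vector [c, d]]"

definition sl2E :: "complex^2^2" where "sl2E = mat2 0 1 0 0"
definition sl2H :: "complex^2^2" where "sl2H = mat2 1 0 0 (-1)"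
definition sl2F :: "complex^2^2" where "sl2F = mat2 0 0 1 0"

text \<open>Coordinates of a traceless matrix w.r.t. the ordered basis E, H, F.\<close>
definition sl2_coords :: "complex^2^2 \<Rightarrow> complex^3" where
  "sl2_coords A = vector [A$1$2, A$1$1, A$2$1]"

definition sl2_basis :: "3 \<Rightarrow> complex^2^2" where
  "sl2_basis j = (if j = 1 then sl2E else if j = 2 then sl2H else sl2F)"

definition Ad :: "complex^2^2 \<Rightarrow> complex^3^3" where
  "Ad P = (\<chi> i j. sl2_coords (P ** sl2_basis j ** matrix_inv P) $ i)"

definition mat3 :: "complex \<Rightarrow> complex \<Rightarrow> complex \<Rightarrow> complex \<Rightarrow> complex \<Rightarrow> complex
    \<Rightarrow> complex \<Rightarrow> complex \<Rightarrow> complex \<Rightarrow> complex^3^3" where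
  "mat3 a11 a12 a13 a21 a22 a23 a31 a32 a33 =
     vector [vector [a11, a12, a13], vector [a21, a22, a23], vector [a31, a32, a33]]"

fun matpow :: "complex^3^3 \<Rightarrow> nat \<Rightarrow> complex^3^3" where
  "matpow A 0 = mat 1"
| "matpow A (Suc k) = matpow A k ** A"

end

theory Submission
  imports Defs
begin

lemma inv_unique:
  fixes A B :: "'a::comm_ring_1^'n^'n"
  assumes "A ** B = mat 1" "B ** A = mat 1"
  shows "matrix_inv A = B"
proof -
  have ex: "\<exists>A'. A ** A' = mat 1 \<and> A' ** A = mat 1" using assms by blast
  define C where "C = matrix_inv A"
  have C: "A ** C = mat 1 \<and> C ** A = mat 1"
    unfolding C_def matrix_inv_def using someI_ex[OF ex] by simp
  have "C = C ** (A ** B)" using assms by (simp add: matrix_mul_rid)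
  also have "\<dots> = (C ** A) ** B" by (simp add: matrix_mul_assoc)
  also have "\<dots> = B" using C by (simp add: matrix_mul_lid)
  finally show ?thesis unfolding C_def .
qed

lemma mat2_mult: "mat2 a b c d ** mat2 a' b' c' d' =
   mat2 (a*a' + b*c') (a*b'+b*d') (c*a'+d*c') (c*b'+d*d')"
  unfolding mat2_def by (simp add: vec_eq_iff forall_2 matrix_matrix_mult_def sum_2)

lemma mat2_one: "mat 1 = mat2 1 0 0 1"
  unfolding mat2_def by (simp add: vec_eq_iff forall_2 mat_def)

lemma mat2_eq: "mat2 a b c d = mat2 a' b' c' d' \<longleftrightarrow> a = a' \<and> b = b' \<and> c = c' \<and> d = d'"
  unfolding mat2_def by (auto simp: vec_eq_iff forall_2)

definition Aexp :: "complex \<Rightarrow> complex \<Rightarrow> complex \<Rightarrow> complex \<Rightarrow> complex^3^3" where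
  "Aexp a b c d = mat3 (a^2) (-2*a*b) (-(b^2)) (-a*c) (a*d+b*c) (b*d) (-(c^2)) (2*c*d) (d^2)"

lemma Ad_mat2:
  assumes "a*d - b*c = 1"
  shows "Ad (mat2 a b c d) = Aexp a b c d"
proof -
  have "matrix_inv (mat2 a b c d) = mat2 d (-b) (-c) a"
    apply (rule inv_unique)
    using assms by (simp_all add: mat2_mult mat2_one mat2_eq algebra_simps)
  then have "Ad (mat2 a b c d) = (\<chi> i j. sl2_coords (mat2 a b c d ** sl2_basis j ** mat2 d (-b) (-c) a) $ i)"
    unfolding Ad_def by simp
  also have "\<dots> = Aexp a b c d"
    unfolding Aexp_def
    by (simp add: vec_eq_iff forall_3 sl2_basis_def sl2E_def sl2H_def sl2F_def
        mat2_mult) (simp add: sl2_coords_def mat3_def mat2_def power2_eq_square algebra_simps)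
  finally show ?thesis .
qed

lemma Aexp_mult: "Aexp a b c d ** Aexp a' b' c' d' =
  Aexp (a*a' + b*c') (a*b'+b*d') (c*a'+d*c') (c*b'+d*d')"
  unfolding Aexp_def mat3_def
  by (simp add: vec_eq_iff forall_3 matrix_matrix_mult_def sum_3 power2_eq_square algebra_simps)

lemma mat_mult_entry: "(mat c ** (A::complex^3^3)) $ i $ j = c * A $ i $ j"
  using exhaust_3[of i] by (auto simp add: matrix_matrix_mult_def mat_def sum_3)

definition Cf :: "complex \<Rightarrow> complex \<Rightarrow> complex \<Rightarrow> complex \<Rightarrow> complex \<Rightarrow> complex \<Rightarrow> complex \<Rightarrow> complex \<Rightarrow> complex^3^3" where
 "Cf e f g h \<mu> n X Y = mat3
      (2*n*f*g + h^2*(2*X - \<mu>*Y) - 2*h*(\<mu>*X - 2*Y) + (\<mu>^2 - 2)*X - \<mu>*Y)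
      (2*f*(n*(e - h) + h*(2*X - \<mu>*Y) - \<mu>*X + 2*Y))
      (f^2*(2*n - 2*X + \<mu>*Y))
      (-g*(n*(h - e) - h*(2*X - \<mu>*Y) + \<mu>*X - 2*Y))
      (n*(e - h)^2 + 2*f*g*(2*X - \<mu>*Y))
      (f*(n*(e - h) + h*(2*X - \<mu>*Y) - \<mu>*X + (\<mu>^2 - 2)*Y))
      (g^2*(2*n - 2*X + \<mu>*Y))
      (-2*g*(n*(h - e) - h*(2*X - \<mu>*Y) + \<mu>*X - (\<mu>^2 - 2)*Y))
      (2*n*f*g + h^2*(2*X - \<mu>*Y) - 2*h*(\<mu>*X - (\<mu>^2 - 2)*Y) + (\<mu>^2 - 2)*X - (\<mu>^3 - 3*\<mu>)*Y)"

lemma mat3_add: "mat3 a1 a2 a3 a4 a5 a6 a7 a8 a9 + mat3 b1 b2 b3 b4 b5 b6 b7 b8 b9 =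
  mat3 (a1+b1) (a2+b2) (a3+b3) (a4+b4) (a5+b5) (a6+b6) (a7+b7) (a8+b8) (a9+b9)"
  unfolding mat3_def by (simp add: vec_eq_iff forall_3)

lemma mat3_scale: "mat c ** mat3 a1 a2 a3 a4 a5 a6 a7 a8 a9 =
  mat3 (c*a1) (c*a2) (c*a3) (c*a4) (c*a5) (c*a6) (c*a7) (c*a8) (c*a9)"
  unfolding mat3_def by (simp add: vec_eq_iff forall_3 matrix_matrix_mult_def mat_def sum_3)

lemma mat3_cong: "a1=b1 \<Longrightarrow> a2=b2 \<Longrightarrow> a3=b3 \<Longrightarrow> a4=b4 \<Longrightarrow> a5=b5 \<Longrightarrow> a6=b6 \<Longrightarrow> a7=b7 \<Longrightarrow> a8=b8 \<Longrightarrow> a9=b9 \<Longrightarrow>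
  mat3 a1 a2 a3 a4 a5 a6 a7 a8 a9 = mat3 b1 b2 b3 b4 b5 b6 b7 b8 b9"
  by simp

lemma Cf_step:
  assumes "e*h - f*g = 1" "\<mu> = e + h" "p^2 - \<mu>*p*q + q^2 = 1"
  shows "Cf e f g h \<mu> (n+1) ((\<mu>*p-q)^2) ((\<mu>*p-q)*p) =
     Cf e f g h \<mu> n (p^2) (p*q) + mat (\<mu>^2-4) ** Aexp (p*e - q) (p*f) (p*g) (p*h - q)"
proof -
  have fg: "f*g = e*h - 1" using assms(1) by (simp add: algebra_simps)
  have t2: "q^2 = 1 - p^2 + \<mu>*p*q" using assms(3) by (simp add: algebra_simps)
  show ?thesis
    unfolding Cf_def Aexp_def mat3_scale mat3_add
    using fg t2 assms(2)
    apply -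
    apply (rule mat3_cong)
    by algebra+
qed


fun Tc :: "complex \<Rightarrow> nat \<Rightarrow> complex" where
  "Tc m 0 = 0" | "Tc m (Suc k) = chebS_nat k m"

lemma Tc_rec: "Tc m (Suc (Suc k)) = m * Tc m (Suc k) - Tc m k"
  by (cases k) simp_all

lemma Tc_cass: "(Tc m (Suc k))^2 - m * Tc m (Suc k) * Tc m k + (Tc m k)^2 = 1"
proof (induction k)
  case 0 then show ?case by simp
next
  case (Suc k)
  then show ?case unfolding Tc_rec[of m k] by algebra
qed

lemma mat_mat3: "(mat c :: complex^3^3) ** mat d = mat (c*d)"
  by (simp add: vec_eq_iff matrix_matrix_mult_def mat_def sum_3 forall_3)

lemma mat_one3: "(mat 1 :: complex^3^3) = mat3 1 0 0 0 1 0 0 0 1"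
  by (simp add: vec_eq_iff mat_def mat3_def forall_3)

lemma pow_closed:
  assumes "e*h - f*g = 1" "\<mu> = e + h"
  shows "matpow (Ad (mat2 e f g h)) (Suc k) =
    Aexp (Tc \<mu> (Suc k) * e - Tc \<mu> k) (Tc \<mu> (Suc k) * f) (Tc \<mu> (Suc k) * g) (Tc \<mu> (Suc k) * h - Tc \<mu> k)"
proof (induction k)
  case 0
  then show ?case using Ad_mat2[OF assms(1)] by (simp add: matrix_mul_lid)
next
  case (Suc k)
  define p where "p = Tc \<mu> (Suc k)"
  define q where "q = Tc \<mu> k"
  have r: "Tc \<mu> (Suc (Suc k)) = \<mu> * p - q" unfolding p_def q_def by (rule Tc_rec)
  have "matpow (Ad (mat2 e f g h)) (Suc (Suc k)) = matpow (Ad (mat2 e f g h)) (Suc k) ** Ad (mat2 e f g h)"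
    by simp
  also have "\<dots> = Aexp (p * e - q) (p * f) (p * g) (p * h - q) ** Aexp e f g h"
    using Suc Ad_mat2[OF assms(1)] unfolding p_def q_def by simp
  also have "\<dots> = Aexp ((\<mu> * p - q) * e - p) ((\<mu> * p - q) * f) ((\<mu> * p - q) * g) ((\<mu> * p - q) * h - p)"
    unfolding Aexp_mult
  proof -
    have fg: "f*g = e*h - 1" using assms(1) by (simp add: algebra_simps)
    have 1: "(p * e - q) * e + p * f * g = (\<mu> * p - q) * e - p" using fg assms(2) by algebra
    have 2: "(p * e - q) * f + p * f * h = (\<mu> * p - q) * f" using fg assms(2) by algebra
    have 3: "p * g * e + (p * h - q) * g = (\<mu> * p - q) * g" using fg assms(2) by algebra
    have 4: "p * g * f + (p * h - q) * h = (\<mu> * p - q) * h - p" using fg assms(2) by algebra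
    show "Aexp ((p * e - q) * e + p * f * g) ((p * e - q) * f + p * f * h) (p * g * e + (p * h - q) * g)
     (p * g * f + (p * h - q) * h) = Aexp ((\<mu> * p - q) * e - p) ((\<mu> * p - q) * f) ((\<mu> * p - q) * g) ((\<mu> * p - q) * h - p)"
      unfolding 1 2 3 4 ..
  qed
  finally show ?case unfolding r p_def by simp
qed

lemma sum_closed:
  assumes "e*h - f*g = 1" "\<mu> = e + h" "\<mu>^2 \<noteq> 4"
  shows "(\<Sum>i<Suc m. matpow (Ad (mat2 e f g h)) i) =
    mat (1 / (\<mu>^2 - 4)) ** Cf e f g h \<mu> (of_nat (Suc m)) ((Tc \<mu> (Suc m))^2) (Tc \<mu> (Suc m) * Tc \<mu> m)"
proof (induction m)
  case 0
  have fg: "f*g = e*h - 1" using assms(1) by (simp add: algebra_simps)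
  have d: "\<mu>^2 - 4 \<noteq> 0" using assms(3) by simp
  have "Cf e f g h \<mu> 1 1 0 = mat3 (\<mu>^2 - 4) 0 0 0 (\<mu>^2 - 4) 0 0 0 (\<mu>^2 - 4)"
    unfolding Cf_def using fg assms(2) apply - by (rule mat3_cong; (simp; fail)?; algebra)
  then show ?case using d by (simp add: mat3_scale mat_one3)
next
  case (Suc m)
  define p where "p = Tc \<mu> (Suc m)"
  define q where "q = Tc \<mu> m"
  have r: "Tc \<mu> (Suc (Suc m)) = \<mu> * p - q" unfolding p_def q_def by (rule Tc_rec)
  have cass: "p^2 - \<mu>*p*q + q^2 = 1" unfolding p_def q_def by (rule Tc_cass)
  have d: "\<mu>^2 - 4 \<noteq> 0" using assms(3) by simp
  have "(\<Sum>i<Suc (Suc m). matpow (Ad (mat2 e f g h)) i) =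
     mat (1 / (\<mu>^2 - 4)) ** Cf e f g h \<mu> (of_nat (Suc m)) (p^2) (p*q) + Aexp (p * e - q) (p * f) (p * g) (p * h - q)"
    using Suc pow_closed[OF assms(1,2), of m] unfolding p_def q_def by simp
  also have "\<dots> = mat (1 / (\<mu>^2 - 4)) ** (Cf e f g h \<mu> (of_nat (Suc m)) (p^2) (p*q) + mat (\<mu>^2-4) ** Aexp (p * e - q) (p * f) (p * g) (p * h - q))"
    using d by (simp add: matrix_add_ldistrib matrix_mul_assoc mat_mat3 matrix_mul_lid)
  also have "\<dots> = mat (1 / (\<mu>^2 - 4)) ** Cf e f g h \<mu> (of_nat (Suc m) + 1) ((\<mu>*p-q)^2) ((\<mu>*p-q)*p)"
    by (subst Cf_step[OF assms(1,2) cass, of "of_nat (Suc m)"]) (rule refl)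
  also have "of_nat (Suc m) + 1 = (of_nat (Suc (Suc m)) :: complex)" by simp
  finally show ?case unfolding r p_def .
qed

theorem proposition3p1:
  fixes e f g h \<mu> X Y :: complex and n :: nat
  assumes "mat2 e f g h \<in> SL2"
    and "\<mu> = e + h"
    and "\<mu>^2 \<noteq> 4"
    and "n \<ge> 1"
    and "X = (chebS (int n - 1) \<mu>)^2"
    and "Y = chebS (int n - 1) \<mu> * chebS (int n - 2) \<mu>"
  shows "(\<Sum>i<n. matpow (Ad (mat2 e f g h)) i) =
    mat (1 / (\<mu>^2 - 4)) ** mat3
      (2*n*f*g + h^2*(2*X - \<mu>*Y) - 2*h*(\<mu>*X - 2*Y) + (\<mu>^2 - 2)*X - \<mu>*Y)
      (2*f*(n*(e - h) + h*(2*X - \<mu>*Y) - \<mu>*X + 2*Y))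
      (f^2*(2*n - 2*X + \<mu>*Y))
      (-g*(n*(h - e) - h*(2*X - \<mu>*Y) + \<mu>*X - 2*Y))
      (n*(e - h)^2 + 2*f*g*(2*X - \<mu>*Y))
      (f*(n*(e - h) + h*(2*X - \<mu>*Y) - \<mu>*X + (\<mu>^2 - 2)*Y))
      (g^2*(2*n - 2*X + \<mu>*Y))
      (-2*g*(n*(h - e) - h*(2*X - \<mu>*Y) + \<mu>*X - (\<mu>^2 - 2)*Y))
      (2*n*f*g + h^2*(2*X - \<mu>*Y) - 2*h*(\<mu>*X - (\<mu>^2 - 2)*Y) + (\<mu>^2 - 2)*X - (\<mu>^3 - 3*\<mu>)*Y)"
proof -
  obtain m where n: "n = Suc m" using assms(4) by (cases n) auto
  have det: "e*h - f*g = 1" using assms(1) unfolding SL2_def mat2_def by (simp add: det_2)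
  have c1: "chebS (int n - 1) \<mu> = Tc \<mu> (Suc m)" unfolding n chebS_def by simp
  have c2: "chebS (int n - 2) \<mu> = Tc \<mu> m"
  proof (cases m)
    case 0 then show ?thesis unfolding n chebS_def by simp
  next
    case (Suc k) then show ?thesis unfolding n chebS_def by (simp add: nat_diff_distrib)
  qed
  have X: "X = (Tc \<mu> (Suc m))^2" using assms(5) c1 by simp
  have Y: "Y = Tc \<mu> (Suc m) * Tc \<mu> m" using assms(6) c1 c2 by simp
  show ?thesis
    using sum_closed[OF det assms(2,3), of m] unfolding n X Y Cf_def by simp
qed

end
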